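(* Consider the fixed-design linear regression model with $n$ observations, $p$ parameters, squared error loss, and let $\theta=\sum_{i=1}^n h_{ii}^2\in[0,p]$, where $h_{ii}$ are the diagonal entries of the hat matrix $H=X(X^TX)^{-1}X^T$ (with $X$ of rank $p$). (a) Under normality of the errors: (i) in random cross validation, the minimizer of $g(n_1)=\sigma^4\Big\{\frac{2}{n-n_1}+\frac{4p+3\theta}{n_1(n-n_1)}\Big\}$ over integers $n_1$ with $n/2\le n_1\le n-1$ is $n_1^{\rm opt}=\lceil n/2\rceil$; (ii) in $k$-fold cross validation, the minimizer of $V_k=\frac1k\mathsf{v}_k+\frac{k-1}{k}\mathsf{c}_k$ over divisors $k\ge2$ of $n$ is $k^{\rm opt}=n$ (leave-one-out cross validation), where $\mathsf{v}_k=\sigma^4\Big\{\frac{2k}{n}+\frac{4k^2p}{(k-1)n^2}+\frac{3k^2\theta}{(k-1)n^2}+\frac{pk^3}{(k-1)^2n^2}\Big\}$ and $\mathsf{c}_k=\sigma^4\Big\{\frac{2k^4(p-\theta)}{(k-1)^4n(n-1)}-\frac{k^2\theta}{(k-1)^2n(n-1)}\Big\}$. (b) For a general error distribution with $\mathbb{E}(|\varepsilon_i|^{4+\epsilon})<\infty$ for some $\epsilon>0$, in random cross validation the minimizer of $g(n_1)=\frac{\mu_4-\sigma^4}{n-n_1}+\frac{(4p+3\theta)\sigma^4}{n_1(n-n_1)}$, with $\mu_4=\mathbb{E}(\varepsilon_i^4)$, over integers $n_1$ with $n/2\le n_1\le n-1$ is $n_1^{\rm opt}=\lceil n/2\rc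eil$.
   Context: Model: $\mathbf y=X\boldsymbol\beta+\boldsymbol\varepsilon$, with $X\in\mathbb{R}^{n\times p}$ the (fixed) design matrix whose first column is all ones, errors i.i.d. with mean $0$ and variance $\sigma^2$ (nondegenerate). A decision rule is fitted by ordinary least squares on a training set of $n_1$ observations and evaluated on the remaining $n_2=n-n_1$ with squared error loss; $\hat\mu_j$ is the average test set error. The optimal training size is defined as the minimizer of the variance of $\hat\mu_j$ over $n_1\ge n/2$; the paper approximates this variance (neglecting $O(n^{-2})$ terms) by the function $g(n_1)$ given in the claim. For $k$-fold cross validation ($n_1=(k-1)n/k$), $\mathsf{v}_k$ and $\mathsf{c}_k$ are the paper's approximations (neglecting $o(n^{-2})$ terms) of $\operatorname{Var}(\hat\mu_j)$ and $\operatorname{Cov}(\hat\mu_j,\hat\mu_{j'})$, and $V_k$ is the resulting approximation of the variance of the $k$-fold estimator; the optimal $k$ is its minimizer. *)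

theory Defs
  imports "HOL-Analysis.Analysis" "HOL-Probability.Probability"
begin

definition hat_matrix :: "real^'p^'n \<Rightarrow> real^'n^'n" where
  "hat_matrix X = X ** matrix_inv (transpose X ** X) ** transpose X"

definition theta :: "real^'p^'n \<Rightarrow> real" where
  "theta X = (\<Sum>i\<in>UNIV. (hat_matrix X $ i $ i)^2)"

definition g_normal :: "nat \<Rightarrow> nat \<Rightarrow> real \<Rightarrow> real \<Rightarrow> nat \<Rightarrow> real" where
  "g_normal n p \<theta> \<sigma> n1 = \<sigma>^4 * (2 / (real n - real n1)
      + (4 * real p + 3 * \<theta>) / (real n1 * (real n - real n1)))"

definition g_general :: "nat \<Rightarrow> nat \<Rightarrow> real \<Rightarrow> real \<Rightarrow> real \<Rightarrow> nat \<Rightarrow> real" where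
  "g_general n p \<theta> \<sigma> \<mu>4 n1 = (\<mu>4 - \<sigma>^4) / (real n - real n1)
      + (4 * real p + 3 * \<theta>) * \<sigma>^4 / (real n1 * (real n - real n1))"

definition v_k :: "nat \<Rightarrow> nat \<Rightarrow> real \<Rightarrow> real \<Rightarrow> nat \<Rightarrow> real" where
  "v_k n p \<theta> \<sigma> k = \<sigma>^4 * (2 * real k / real n
      + 4 * (real k)^2 * real p / ((real k - 1) * (real n)^2)
      + 3 * (real k)^2 * \<theta> / ((real k - 1) * (real n)^2)
      + real p * (real k)^3 / ((real k - 1)^2 * (real n)^2))"

definition c_k :: "nat \<Rightarrow> nat \<Rightarrow> real \<Rightarrow> real \<Rightarrow> nat \<Rightarrow> real" where
  "c_k n p \<theta> \<sigma> k = \<sigma>^4 * (2 * (real k)^4 * (real p - \<theta>) / ((real k - 1)^4 * real n * (real n - 1))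
      - (real k)^2 * \<theta> / ((real k - 1)^2 * real n * (real n - 1)))"

definition V_k :: "nat \<Rightarrow> nat \<Rightarrow> real \<Rightarrow> real \<Rightarrow> nat \<Rightarrow> real" where
  "V_k n p \<theta> \<sigma> k = (1 / real k) * v_k n p \<theta> \<sigma> k + ((real k - 1) / real k) * c_k n p \<theta> \<sigma> k"

definition unique_argmin :: "('a \<Rightarrow> real) \<Rightarrow> ('a \<Rightarrow> bool) \<Rightarrow> 'a \<Rightarrow> bool" where
  "unique_argmin f P x \<longleftrightarrow> P x \<and> (\<forall>y. P y \<and> y \<noteq> x \<longrightarrow> f x < f y)"

end

theory Submission
  imports Defs
begin



lemma aux_ineq: fixes t N :: real assumes th0: "t \<ge> 0" and N2': "N \<ge> 2"
  shows "t / (N * (N - 1)) \<le> 3 * t / N^2"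
proof -
      have "0 \<le> t * (2*N-3)" using th0 N2' by simp
      moreover have "3 * t * (N - 1) - t * N = t * (2*N-3)" by (simp add: algebra_simps)
      ultimately have h: "t * N \<le> 3 * t * (N - 1)" by linarith
      have "N * (N-1) > 0" using N2' by simp
      then show ?thesis using h N2' by (simp add: divide_simps power2_eq_square mult.assoc)
qed

lemma theta_le_p:
  fixes X :: "real^'p^'n"
  assumes rk: "rank X = CARD('p)"
  shows "theta X \<le> real CARD('p)"
proof -
  define A where "A = transpose X ** X"
  have injX: "inj ((*v) X)" using rk full_rank_injective by blast
  have ker: "\<forall>x. A *v x = 0 \<longrightarrow> x = 0"
  proof (intro allI impI)
    fix x assume "A *v x = 0"
    then have "transpose X *v (X *v x) = 0" by (simp add: A_def matrix_vector_mul_assoc)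
    then have "(X *v x) v* X = 0" by simp
    then have "inner ((X *v x) v* X) x = 0" by simp
    then have "inner (X *v x) (X *v x) = 0" by (simp add: dot_lmul_matrix)
    then have "X *v x = X *v 0" by simp
    then show "x = 0" using injX by (meson injD)
  qed
  then obtain B where "B ** A = mat 1" using matrix_left_invertible_ker by blast
  then have invA: "invertible A" using invertible_left_inverse by blast
  define Ai where "Ai = matrix_inv A"
  have "A ** Ai = mat 1 \<and> Ai ** A = mat 1"
    unfolding Ai_def matrix_inv_def using invA unfolding invertible_def by (rule someI_ex)
  then have AAi: "A ** Ai = mat 1" and AiA: "Ai ** A = mat 1" by auto
  have tA: "transpose A = A" by (simp add: A_def matrix_transpose_mul)
  have "transpose Ai ** A = mat 1"
    using arg_cong[OF AAi, of transpose] by (simp add: matrix_transpose_mul tA)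
  then have tAi: "transpose Ai = Ai"
    by (metis AAi matrix_mul_assoc matrix_mul_lid matrix_mul_rid)
  define H where "H = X ** Ai ** transpose X"
  have HH: "hat_matrix X = H" by (simp add: hat_matrix_def H_def Ai_def A_def)
  have tH: "transpose H = H" by (simp add: H_def matrix_transpose_mul tAi matrix_mul_assoc)
  have HHH: "H ** H = H"
  proof -
    have "H ** H = X ** Ai ** (transpose X ** X) ** Ai ** transpose X"
      by (simp add: H_def matrix_mul_assoc)
    also have "\<dots> = X ** (Ai ** A) ** Ai ** transpose X" by (simp add: A_def matrix_mul_assoc)
    also have "\<dots> = H" by (simp add: AiA H_def)
    finally show ?thesis .
  qed
  have diag: "(H $ i $ i)^2 \<le> H $ i $ i" for i
  proof -
    have "H $ i $ i = (H ** H) $ i $ i" by (simp add: HHH)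
    also have "\<dots> = (\<Sum>j\<in>UNIV. H $ i $ j * H $ j $ i)" by (simp add: matrix_matrix_mult_def)
    also have "\<dots> = (\<Sum>j\<in>UNIV. (H $ i $ j)^2)"
    proof (rule sum.cong)
      fix j
      have "H $ j $ i = H $ i $ j" using arg_cong[OF tH, of "\<lambda>M. M $ i $ j"] by (simp add: transpose_def)
      then show "H $ i $ j * H $ j $ i = (H $ i $ j)^2" by (simp add: power2_eq_square)
    qed simp
    finally have e: "H $ i $ i = (\<Sum>j\<in>UNIV. (H $ i $ j)^2)" .
    have "(H $ i $ i)^2 \<le> (\<Sum>j\<in>UNIV. (H $ i $ j)^2)"
      by (rule member_le_sum[of i UNIV "\<lambda>j. (H $ i $ j)^2"]) auto
    then show ?thesis using e by simp
  qed
  have "trace H = trace (X ** (Ai ** transpose X))" by (simp add: H_def matrix_mul_assoc)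
  also have "\<dots> = trace ((Ai ** transpose X) ** X)" by (rule trace_mul_sym)
  also have "\<dots> = trace (Ai ** A)" by (simp add: A_def matrix_mul_assoc)
  also have "\<dots> = real CARD('p)" by (simp add: AiA trace_I)
  finally have tr: "trace H = real CARD('p)" .
  have "theta X = (\<Sum>i\<in>UNIV. (H $ i $ i)^2)" by (simp add: theta_def HH)
  also have "\<dots> \<le> (\<Sum>i\<in>UNIV. H $ i $ i)" by (rule sum_mono) (rule diag)
  also have "\<dots> = trace H" by (simp add: trace_def)
  finally show ?thesis using tr by simp
qed


lemma Vk_real:
  fixes K N p \<theta> s :: real
  assumes "K - 1 \<noteq> 0" "N - 1 \<noteq> 0" "K \<noteq> 0" "N \<noteq> 0"
  shows "(1 / K) * (s^4 * (2 * K / N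
      + 4 * K^2 * p / ((K - 1) * N^2)
      + 3 * K^2 * \<theta> / ((K - 1) * N^2)
      + p * K^3 / ((K - 1)^2 * N^2)))
   + ((K - 1) / K) * (s^4 * (2 * K^4 * (p - \<theta>) / ((K - 1)^4 * N * (N - 1))
      - K^2 * \<theta> / ((K - 1)^2 * N * (N - 1))))
   = s^4 * (2 / N + ((4 * p + 3 * \<theta>) / N^2 - \<theta> / (N * (N - 1))) * (K / (K - 1))
     + p / N^2 * (K / (K - 1))^2 + 2 * (p - \<theta>) / (N * (N - 1)) * (K / (K - 1))^3)"
  using assms
  apply (simp add: divide_simps)
  apply algebra
  done


lemma g_shape:
  fixes a b n x y :: real
  assumes "a \<ge> 0" "b \<ge> 0" "a > 0 \<or> b > 0" "n / 2 \<le> x" "x < y" "y < n"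
  shows "a / (n - x) + b / (x * (n - x)) < a / (n - y) + b / (y * (n - y))"
proof -
  have p1: "0 < n - y" "n - y < n - x" using assms by auto
  have x0: "x > 0" using assms by linarith
  have q: "y * (n - y) < x * (n - x)"
  proof -
    have "x * (n - x) - y * (n - y) = (y - x) * (x + y - n)" by (simp add: algebra_simps)
    moreover have "(y - x) * (x + y - n) > 0" using assms by (intro mult_pos_pos) auto
    ultimately show ?thesis by linarith
  qed
  have q0: "0 < y * (n - y)" using p1 x0 assms by (intro mult_pos_pos) auto
  have i1: "1 / (n - x) < 1 / (n - y)" using p1 by (simp add: frac_less2)
  have i2: "1 / (x * (n - x)) < 1 / (y * (n - y))" using q q0 by (simp add: frac_less2)
  have "a * (1 / (n - x)) \<le> a * (1 / (n - y))" using i1 assms by (intro mult_left_mono) auto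
  moreover have "b * (1 / (x * (n - x))) \<le> b * (1 / (y * (n - y)))" using i2 assms by (intro mult_left_mono) auto
  moreover have "a * (1 / (n - x)) < a * (1 / (n - y)) \<or> b * (1 / (x * (n - x))) < b * (1 / (y * (n - y)))"
    using assms(3) mult_strict_left_mono[OF i1, of a] mult_strict_left_mono[OF i2, of b] by blast
  ultimately have "a * (1 / (n - x)) + b * (1 / (x * (n - x))) < a * (1 / (n - y)) + b * (1 / (y * (n - y)))"
    by linarith
  then show ?thesis by simp
qed

lemma argmin_g:
  fixes f :: "nat \<Rightarrow> real" and n :: nat
  assumes n2: "n \<ge> 2"
    and mono: "\<And>x y. real n / 2 \<le> x \<Longrightarrow> x < y \<Longrightarrow> y < real n \<Longrightarrow> F x < F y"
    and fF: "\<And>m. f m = F (real m)"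
  shows "unique_argmin f (\<lambda>n1. real n / 2 \<le> real n1 \<and> n1 \<le> n - 1) (nat \<lceil>real n / 2\<rceil>)"
proof -
  define m where "m = nat \<lceil>real n / 2\<rceil>"
  have m1: "real n / 2 \<le> real m" unfolding m_def by linarith
  have m2: "m \<le> n - 1" unfolding m_def using n2 by linarith
  have "f m < f y" if "real n / 2 \<le> real y" "y \<le> n - 1" "y \<noteq> m" for y
  proof -
    have "\<lceil>real n / 2\<rceil> \<le> int y" using that(1) by (simp add: ceiling_le)
    then have "m < y" using that(3) unfolding m_def by linarith
    then show ?thesis unfolding fF using mono[OF m1, of "real y"] that n2 by auto
  qed
  then show ?thesis unfolding unique_argmin_def m_def[symmetric] using m1 m2 by auto
qed

lemma F_mono:
  fixes b c d e :: real
  assumes "b > 0" "c \<ge> 0" "d \<ge> 0" "0 < u" "u < v"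
  shows "b * u + c * u^2 + d * u^3 < b * v + c * v^2 + d * v^3"
proof -
  have "u^2 \<le> v^2" "u^3 \<le> v^3" using assms by (auto intro: power_mono)
  then have "c * u^2 \<le> c * v^2" "d * u^3 \<le> d * v^3" using assms by (auto intro: mult_left_mono)
  moreover have "b * u < b * v" using assms by simp
  ultimately show ?thesis by linarith
qed



lemma moment4_ge:
  fixes M :: "'a measure" and e :: "'a \<Rightarrow> real"
  assumes "prob_space M" "e \<in> borel_measurable M" "\<sigma> > 0" "\<epsilon> > 0"
    "integrable M (\<lambda>x. \<bar>e x\<bar> powr (4 + \<epsilon>))"
    "(LINT x|M. (e x)^2) = \<sigma>^2"
  shows "\<sigma>^4 \<le> (LINT x|M. (e x)^4)"
proof -
  interpret prob_space M by fact
  have i2: "integrable M (\<lambda>x. (e x)^2)"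
    using assms(3,6) not_integrable_integral_eq by fastforce
  have bnd: "norm ((e x)^4) \<le> norm (1 + \<bar>e x\<bar> powr (4 + \<epsilon>))" for x
  proof (cases "\<bar>e x\<bar> \<le> 1")
    case True
    then have "\<bar>e x\<bar>^4 \<le> 1^4" by (intro power_mono) auto
    then have a: "(e x)^4 \<le> 1" by (simp add: power_abs)
    have "\<bar>e x\<bar> powr (4 + \<epsilon>) \<ge> 0" by simp
    with a have "(e x)^4 \<le> 1 + \<bar>e x\<bar> powr (4 + \<epsilon>)" by linarith
    then show ?thesis by simp
  next
    case False
    then have "\<bar>e x\<bar> powr 4 \<le> \<bar>e x\<bar> powr (4 + \<epsilon>)" using assms(4) by (intro powr_mono) auto
    moreover have "\<bar>e x\<bar> powr 4 = \<bar>e x\<bar>^4" using False by (simp add: powr_realpow)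
    ultimately show ?thesis by (simp add: power_abs)
  qed
  have i4: "integrable M (\<lambda>x. (e x)^4)"
    by (rule Bochner_Integration.integrable_bound[where f="\<lambda>x. 1 + \<bar>e x\<bar> powr (4 + \<epsilon>)"])
       (use assms(2,5) bnd in auto)
  have "0 \<le> (LINT x|M. ((e x)^2 - \<sigma>^2)^2)" by simp
  also have "(LINT x|M. ((e x)^2 - \<sigma>^2)^2) = (LINT x|M. (e x)^4 - 2 * \<sigma>^2 * (e x)^2 + \<sigma>^4)"
    by (rule Bochner_Integration.integral_cong) (auto simp: power2_eq_square power4_eq_xxxx algebra_simps)
  also have "\<dots> = (LINT x|M. (e x)^4) - 2 * \<sigma>^2 * (LINT x|M. (e x)^2) + \<sigma>^4"
    using i2 i4 by (simp add: Bochner_Integration.integral_add Bochner_Integration.integral_diff prob_space)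
  finally show ?thesis using assms(6) by (simp add: power2_eq_square power4_eq_xxxx)
qed




theorem proposition6:
  fixes X :: "real^'p^'n"
  defines "n \<equiv> CARD('n)" and "p \<equiv> CARD('p)"
  assumes n_ge2: "n \<ge> 2"
    and ones: "\<exists>j. \<forall>i. X $ i $ j = 1"
    and full_rank: "rank X = p"
  shows
    "(\<forall>(M :: 'a measure) e \<sigma>. prob_space M \<and> \<sigma> > 0 \<and>
        distributed M lborel e (normal_density 0 \<sigma>) \<longrightarrow>
        unique_argmin (g_normal n p (theta X) \<sigma>)
          (\<lambda>n1. real n / 2 \<le> real n1 \<and> n1 \<le> n - 1) (nat \<lceil>real n / 2\<rceil>)
      \<and> unique_argmin (V_k n p (theta X) \<sigma>)
          (\<lambda>k. k \<ge> 2 \<and> k dvd n) n)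
   \<and> (\<forall>(M :: 'a measure) e \<sigma> \<epsilon>. prob_space M \<and> e \<in> borel_measurable M \<and> \<sigma> > 0 \<and> \<epsilon> > 0 \<and>
        integrable M (\<lambda>x. \<bar>e x\<bar> powr (4 + \<epsilon>)) \<and>
        (LINT x|M. e x) = 0 \<and> (LINT x|M. (e x)^2) = \<sigma>^2 \<longrightarrow>
        unique_argmin (g_general n p (theta X) \<sigma> (LINT x|M. (e x)^4))
          (\<lambda>n1. real n / 2 \<le> real n1 \<and> n1 \<le> n - 1) (nat \<lceil>real n / 2\<rceil>))"
  proof -
  have p1: "p \<ge> 1" unfolding p_def by (simp add: Suc_le_eq)
  have th0: "theta X \<ge> 0" unfolding theta_def by (intro sum_nonneg) auto
  have thp: "theta X \<le> real p" using theta_le_p[OF full_rank[unfolded p_def]] p_def by simp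
  define c where "c = 4 * real p + 3 * theta X"
  have c0: "c > 0" using p1 th0 unfolding c_def by simp
  have N2: "real n \<ge> 2" using n_ge2 by simp
  have A: "unique_argmin (g_normal n p (theta X) \<sigma>)
          (\<lambda>n1. real n / 2 \<le> real n1 \<and> n1 \<le> n - 1) (nat \<lceil>real n / 2\<rceil>)" if s: "\<sigma> > 0" for \<sigma> :: real
  proof (rule argmin_g[OF n_ge2, where F="\<lambda>x. (2 * \<sigma>^4) / (real n - x) + (c * \<sigma>^4) / (x * (real n - x))"])
    fix x y :: real assume "real n / 2 \<le> x" "x < y" "y < real n"
    then show "(2 * \<sigma>^4) / (real n - x) + (c * \<sigma>^4) / (x * (real n - x))
       < (2 * \<sigma>^4) / (real n - y) + (c * \<sigma>^4) / (y * (real n - y))"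
      using s c0 by (intro g_shape) auto
  next
    fix m show "g_normal n p (theta X) \<sigma> m = (2 * \<sigma>^4) / (real n - real m) + (c * \<sigma>^4) / (real m * (real n - real m))"
      unfolding g_normal_def c_def by (simp add: algebra_simps add_divide_distrib)
  qed
  have B: "unique_argmin (V_k n p (theta X) \<sigma>) (\<lambda>k. k \<ge> 2 \<and> k dvd n) n" if s: "\<sigma> > 0" for \<sigma> :: real
  proof -
    define N where "N = real n"
    define b where "b = (4 * real p + 3 * theta X) / N^2 - theta X / (N * (N - 1))"
    define cc where "cc = real p / N^2"
    define d where "d = 2 * (real p - theta X) / (N * (N - 1))"
    have N2': "N \<ge> 2" using N2 N_def by simp
    have form: "V_k n p (theta X) \<sigma> k = \<sigma>^4 * (2 / N + (b * (real k / (real k - 1)) + cc * (real k / (real k - 1))^2 + d * (real k / (real k - 1))^3))"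
      if "k \<ge> 2" for k
    proof -
      have "real k - 1 \<noteq> 0" "real k \<noteq> 0" using that by auto
      moreover have "N - 1 \<noteq> 0" "N \<noteq> 0" using N2' by auto
      ultimately show ?thesis unfolding V_k_def v_k_def c_k_def b_def cc_def d_def N_def[symmetric]
        by (subst Vk_real) (auto simp: algebra_simps)
    qed
    have b0: "b > 0"
    proof -
      have "theta X / (N * (N - 1)) \<le> 3 * theta X / N^2"
        by (rule aux_ineq[OF th0 N2'])
      moreover have "4 * real p / N^2 > 0" using p1 N2' by simp
      ultimately show ?thesis unfolding b_def by (simp add: add_divide_distrib)
    qed
    have cc0: "cc \<ge> 0" unfolding cc_def by simp
    have d0: "d \<ge> 0" unfolding d_def using thp N2' by simp
    have "V_k n p (theta X) \<sigma> n < V_k n p (theta X) \<sigma> k" if k: "k \<ge> 2" "k dvd n" "k \<noteq> n" for k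
    proof -
      have "k \<le> n" using k n_ge2 by (simp add: dvd_imp_le)
      then have kn: "real k < N" using k N_def by simp
      have u: "real n / (real n - 1) < real k / (real k - 1)"
      proof -
        have "1 / (N - 1) < 1 / (real k - 1)" using kn k by (intro frac_less2) auto
        moreover have "real n / (real n - 1) = 1 + 1 / (N - 1)" using N2' N_def by (simp add: field_simps)
        moreover have "real k / (real k - 1) = 1 + 1 / (real k - 1)" using k by (simp add: field_simps)
        ultimately show ?thesis by simp
      qed
      have "0 < real n / (real n - 1)" using N2' N_def by simp
      from F_mono[OF b0 cc0 d0 this u] have
        "b * (real n / (real n - 1)) + cc * (real n / (real n - 1))^2 + d * (real n / (real n - 1))^3
         < b * (real k / (real k - 1)) + cc * (real k / (real k - 1))^2 + d * (real k / (real k - 1))^3" .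
      then show ?thesis using form[OF k(1)] form[OF n_ge2] s by simp
    qed
    then show ?thesis unfolding unique_argmin_def using n_ge2 by auto
  qed
  have C: "unique_argmin (g_general n p (theta X) \<sigma> \<mu>)
          (\<lambda>n1. real n / 2 \<le> real n1 \<and> n1 \<le> n - 1) (nat \<lceil>real n / 2\<rceil>)"
    if s: "\<sigma> > 0" and mu: "\<sigma>^4 \<le> \<mu>" for \<sigma> \<mu> :: real
  proof (rule argmin_g[OF n_ge2, where F="\<lambda>x. (\<mu> - \<sigma>^4) / (real n - x) + (c * \<sigma>^4) / (x * (real n - x))"])
    fix x y :: real assume "real n / 2 \<le> x" "x < y" "y < real n"
    then show "(\<mu> - \<sigma>^4) / (real n - x) + (c * \<sigma>^4) / (x * (real n - x))
       < (\<mu> - \<sigma>^4) / (real n - y) + (c * \<sigma>^4) / (y * (real n - y))"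
      using s c0 mu by (intro g_shape) auto
  next
    fix m show "g_general n p (theta X) \<sigma> \<mu> m = (\<mu> - \<sigma>^4) / (real n - real m) + (c * \<sigma>^4) / (real m * (real n - real m))"
      unfolding g_general_def c_def by simp
  qed
  show ?thesis
    using A B C moment4_ge by blast
qed

end
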